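(* Let $n \ge 1$. Consider $2n$ water tanks: $n$ "red" tanks each initially containing $1$ unit of water, and $n$ "blue" tanks each initially containing $0$ units. There is a strategy (a finite sequence of pairwise equilibrations) after which every red tank contains strictly less than $\frac{2}{\sqrt{n}}$ units of water and every blue tank contains strictly more than $1 - \frac{2}{\sqrt{n}}$ units of water.
   Context: A configuration of water tanks is an assignment of a real number (the amount of water, or water level) $x_a$ to each tank $a$. Equilibrating two tanks $a \neq b$ replaces both $x_a$ and $x_b$ by $\frac{x_a + x_b}{2}$ and leaves all other tanks unchanged. A strategy is a finite sequence of (unordered) pairs of distinct tanks, executed as the corresponding sequence of equilibrations. *)

theory Defs
  imports Complex_Main
begin

type_synonym config = "nat \<Rightarrow> real"

definition equilibrate :: "config \<Rightarrow> nat \<times> nat \<Rightarrow> config" where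
  "equilibrate x p = (let (a, b) = p; m = (x a + x b) / 2 in x(a := m, b := m))"

definition run_strategy :: "config \<Rightarrow> (nat \<times> nat) list \<Rightarrow> config" where
  "run_strategy x s = foldl equilibrate x s"

definition valid_strategy :: "nat set \<Rightarrow> (nat \<times> nat) list \<Rightarrow> bool" where
  "valid_strategy A s = (\<forall>(a, b) \<in> set s. a \<in> A \<and> b \<in> A \<and> a \<noteq> b)"

end

theory Submission
  imports Defs
begin


fun u :: "nat \<Rightarrow> nat \<Rightarrow> real" where
  "u 0 j = 0"
| "u (Suc k) 0 = 1"
| "u (Suc k) (Suc j) = (u k (Suc j) + u (Suc k) j) / 2"

lemma u_nonneg: "u k j \<ge> 0"
  by (induction k j rule: u.induct) auto

lemma u_sym: "(k, j) \<noteq> (0, 0) \<Longrightarrow> u k j + u j k = 1"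
proof (induction k j rule: u.induct)
  case (1 j) then show ?case by (cases j) auto
next
  case (2 k) then show ?case by simp
next
  case (3 k j)
  have a: "u k (Suc j) + u (Suc j) k = 1" using 3 by simp
  have b: "u (Suc k) j + u j (Suc k) = 1" using 3 by simp
  show ?case using a b by (cases k; cases j) (auto simp: field_simps)
qed

lemma u_1j: "u (Suc 0) j = 1 / 2 ^ j"
  by (induction j) auto

lemma u_k1: "u k (Suc 0) = 1 - 1 / 2 ^ k"
  by (induction k) (auto simp: field_simps)

lemma u_diff: "u (Suc k) j - u (Suc k) (Suc j) = real ((k + j) choose j) / 2 ^ (k + j + 1)"
proof (induction k arbitrary: j)
  case 0 then show ?case by (simp add: u_1j field_simps)
next
  case (Suc k)
  note IHk = Suc.IH
  show ?case
  proof (induction j)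
    case 0
    show ?case using u_k1[of "Suc k"] by (simp add: field_simps)
  next
    case (Suc j)
    have "u (Suc (Suc k)) (Suc j) - u (Suc (Suc k)) (Suc (Suc j))
       = ((u (Suc k) (Suc j) - u (Suc k) (Suc (Suc j))) + (u (Suc (Suc k)) j - u (Suc (Suc k)) (Suc j))) / 2"
      by (simp add: field_simps)
    also have "\<dots> = (real ((k + Suc j) choose Suc j) / 2 ^ (k + Suc j + 1) + real ((Suc k + j) choose j) / 2 ^ (Suc k + j + 1)) / 2"
      using IHk[of "Suc j"] Suc.IH by simp
    also have "\<dots> = real ((Suc k + Suc j) choose Suc j) / 2 ^ (Suc k + Suc j + 1)"
      by (simp add: field_simps)
    finally show ?case .
  qed
qed

lemma u_dec: "u k (Suc j) \<le> u k j"
proof (cases k)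
  case 0 then show ?thesis by simp
next
  case (Suc k')
  have "real ((k' + j) choose j) / 2 ^ (k' + j + 1) \<ge> 0" by simp
  then show ?thesis using u_diff[of k' j] unfolding Suc by linarith
qed

lemma u_inc: "u k j \<le> u (Suc k) j"
proof (cases "k = 0 \<and> j = 0")
  case True then show ?thesis by simp
next
  case False
  have "u k j + u j k = 1" using False u_sym by auto
  moreover have "u (Suc k) j + u j (Suc k) = 1" using u_sym by auto
  moreover have "u j (Suc k) \<le> u j k" by (rule u_dec)
  ultimately show ?thesis by linarith
qed

lemma u_mono: "k \<le> k' \<Longrightarrow> u k j \<le> u k' j"
  using lift_Suc_mono_le[of "\<lambda>k. u k j"] u_inc by blast

definition R :: "nat \<Rightarrow> nat \<Rightarrow> real" where
  "R m j = (\<Sum>k<m. u (Suc k) j)"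

lemma R_step: "R m (Suc j) = R m j - u m (Suc j)"
proof (induction m)
  case 0 then show ?case by (simp add: R_def)
next
  case (Suc m)
  have "R (Suc m) (Suc j) = R m (Suc j) + u (Suc m) (Suc j)" by (simp add: R_def)
  also have "\<dots> = R m j - u m (Suc j) + (u m (Suc j) + u (Suc m) j) / 2" using Suc by simp
  also have "\<dots> = R (Suc m) j - u (Suc m) (Suc j)" by (simp add: R_def field_simps)
  finally show ?case .
qed

lemma S_step: "R (Suc n) (Suc n) = R n n + real ((2*n) choose n) / 2 ^ (2*n+1)"
proof -
  have a: "R (Suc n) (Suc n) = R (Suc n) n - u (Suc n) (Suc n)" by (rule R_step)
  have b: "R (Suc n) n = R n n + u (Suc n) n" unfolding R_def by simp
  have c: "u (Suc n) n - u (Suc n) (Suc n) = real ((2*n) choose n) / 2 ^ (2*n+1)"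
    using u_diff[of n n] by (simp only: mult_2)
  show ?thesis using a b c by linarith
qed

lemma central_rec: "Suc n * ((2 * Suc n) choose Suc n) = 2 * (2*n+1) * ((2*n) choose n)"
proof -
  have e1: "(2 * Suc n) choose Suc n = Suc (2*n+1) choose Suc n" by simp
  have e2: "Suc (2*n+1) choose Suc n = ((2*n+1) choose n) + ((2*n+1) choose Suc n)" by simp
  have e3: "(2*n+1) choose n = (2*n+1) choose Suc n"
    using binomial_symmetric[of n "2*n+1"] by simp
  have e4: "Suc n * (Suc (2*n) choose Suc n) = Suc (2*n) * ((2*n) choose n)"
    by (rule Suc_times_binomial)
  show ?thesis using e1 e2 e3 e4 by (simp add: algebra_simps)
qed

lemma central_bound: "(real ((2*n) choose n) / 4 ^ n)^2 * (2*n+1) \<le> 1"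
proof (induction n)
  case 0 then show ?case by simp
next
  case (Suc n)
  define c where "c = real ((2*n) choose n) / 4 ^ n"
  have r: "real ((2 * Suc n) choose Suc n) = 2 * (2*n+1) * real ((2*n) choose n) / (n+1)"
    using arg_cong[OF central_rec[of n], of real] by (simp add: field_simps)
  have c': "real ((2 * Suc n) choose Suc n) / 4 ^ Suc n = c * (2*n+1) / (2*n+2)"
  proof -
    have "2 * (2*real n+1) * real ((2*n) choose n) / (real n+1) / 4 ^ Suc n = real ((2*n) choose n) / 4 ^ n * (2*n+1) / (2*n+2)"
      by (simp add: divide_simps) (simp add: algebra_simps)
    then show ?thesis unfolding r c_def by (simp add: algebra_simps)
  qed
  have "(c * (2*real n+1) / (2*real n+2))^2 * (2 * real (Suc n) + 1) = (c^2 * (2*real n+1)) * ((2*real n+1)*(2*real n+3) / (2*real n+2)^2)"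
    by (simp add: field_simps power2_eq_square)
  also have "\<dots> \<le> 1 * 1"
  proof (rule mult_mono)
    show "c^2 * (2*real n+1) \<le> 1" using Suc unfolding c_def by (simp add: algebra_simps)
    have "(2*real n+1)*(2*real n+3) \<le> (2*real n+2)^2" by (simp add: power2_eq_square algebra_simps)
    then show "(2*real n+1)*(2*real n+3) / (2*real n+2)^2 \<le> 1" by simp
  qed auto
  finally have F: "(c * (2*real n+1) / (2*real n+2))^2 * (2 * real (Suc n) + 1) \<le> 1" by simp
  show ?case unfolding c' using F by (simp add: ac_simps)
qed

lemma S_bound: "R n n \<le> sqrt n"
proof (induction n)
  case 0 then show ?case by (simp add: R_def)
next
  case (Suc n)
  define c where "c = real ((2*n) choose n) / 4 ^ n"
  have c0: "c \<ge> 0" by (simp add: c_def)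
  have cb: "c^2 * (2*real n+1) \<le> 1" using central_bound[of n] unfolding c_def by (simp add: algebra_simps)
  have step: "R (Suc n) (Suc n) = R n n + c / 2"
  proof -
    have h4: "(2::real)^(2*n+1) = 2*4^n" by (simp add: power_mult)
    show ?thesis using S_step[of n] unfolding h4 c_def by simp
  qed
  have "c \<le> 1 / sqrt (2*real n+1)"
  proof -
    have "c^2 \<le> 1 / (2*real n+1)" using cb by (simp add: field_simps)
    then have "sqrt (c^2) \<le> sqrt (1 / (2*real n+1))" using real_sqrt_le_mono by blast
    then show ?thesis using c0 by (simp add: real_sqrt_divide)
  qed
  moreover have "1 / sqrt (2*real n+1) \<le> 2 * (sqrt (Suc n) - sqrt n)"
  proof -
    have a: "sqrt (real n) \<le> sqrt (2*real n+1)" "sqrt (real (Suc n)) \<le> sqrt (2*real n+1)" by auto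
    have p: "sqrt (2*real n+1) > 0" by simp
    have "(sqrt (Suc n) - sqrt n) * (sqrt (Suc n) + sqrt n) = 1"
      by (simp add: algebra_simps)
    moreover have "sqrt (Suc n) + sqrt n > 0" by (simp add: add_pos_nonneg)
    ultimately have "sqrt (Suc n) - sqrt n = 1 / (sqrt (Suc n) + sqrt n)"
      by (simp add: eq_divide_eq)
    moreover have "1 / sqrt (2*real n+1) \<le> 2 / (sqrt (Suc n) + sqrt n)"
    proof -
      have "2 / (2 * sqrt (2*real n+1)) \<le> 2 / (sqrt (Suc n) + sqrt n)"
        apply (rule divide_left_mono)
        subgoal using a by linarith
        subgoal by simp
        subgoal using p \<open>sqrt (Suc n) + sqrt n > 0\<close> by simp
        done
      then show ?thesis by simp
    qed
    ultimately show ?thesis by simp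
  qed
  ultimately have "c \<le> 2 * (sqrt (real (Suc n)) - sqrt (real n))" by (rule order_trans)
  then have "c / 2 \<le> sqrt (real (Suc n)) - sqrt (real n)" by simp
  then show ?case using step Suc.IH by linarith
qed



definition st :: "nat \<Rightarrow> nat \<Rightarrow> nat \<Rightarrow> config" where
 "st n i j t = (if t < n then (if t < i then u (Suc t) n else if t = i then u (Suc i) j else 1)
   else if t < 2*n then (if t - n < j then u (Suc i) (t - n + 1) else u i (t - n + 1)) else 0)"

lemma st_init: "st n 0 0 = (\<lambda>i. if i < n then 1 else 0)"
  by (rule ext) (simp add: st_def)

lemma st_step:
  assumes "i < n" "j < n"
  shows "equilibrate (st n i j) (i, n+j) = st n i (Suc j)"
proof (rule ext)
  fix t
  have m: "(st n i j i + st n i j (n+j)) / 2 = u (Suc i) (Suc j)"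
    using assms by (simp add: st_def add.commute)
  show "equilibrate (st n i j) (i, n+j) t = st n i (Suc j) t"
    unfolding equilibrate_def Let_def using m assms
    by (auto simp: st_def)
qed

lemma st_inner:
  assumes "i < n" "m \<le> n"
  shows "foldl equilibrate (st n i 0) (map (\<lambda>j. (i, n+j)) [0..<m]) = st n i m"
  using assms(2)
proof (induction m)
  case 0 then show ?case by simp
next
  case (Suc m)
  then show ?case using st_step[OF assms(1), of m] by simp
qed

lemma st_trans: "i < n \<Longrightarrow> st n i n = st n (Suc i) 0"
  by (rule ext) (auto simp: st_def less_Suc_eq)

definition phase1 :: "nat \<Rightarrow> (nat \<times> nat) list" where
  "phase1 n = concat (map (\<lambda>i. map (\<lambda>j. (i, n+j)) [0..<n]) [0..<n])"

lemma st_outer: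
  assumes "m \<le> n"
  shows "foldl equilibrate (st n 0 0) (concat (map (\<lambda>i. map (\<lambda>j. (i, n+j)) [0..<n]) [0..<m])) = st n m 0"
  using assms
proof (induction m)
  case 0 then show ?case by simp
next
  case (Suc m)
  then have "m < n" by simp
  then show ?case using Suc st_inner[of m n n] st_trans[of m n] by simp
qed

lemma phase1_run: "run_strategy (\<lambda>i. if i < n then 1 else 0) (phase1 n) = st n n 0"
  unfolding run_strategy_def phase1_def st_init[symmetric] using st_outer[of n n] by simp

lemma phase1_valid: "set (phase1 n) \<subseteq> {(p, q). p < n \<and> n \<le> q \<and> q < 2*n}"
  unfolding phase1_def by auto

fun hyp :: "nat \<Rightarrow> nat \<Rightarrow> (nat \<times> nat) list" where
  "hyp b 0 = []"
| "hyp b (Suc L) = hyp b L @ hyp (b + 2^L) L @ map (\<lambda>i. (b+i, b+2^L+i)) [0..<2^L]"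

lemma hyp_valid: "set (hyp b L) \<subseteq> {(p, q). b \<le> p \<and> p < q \<and> q < b + 2^L}"
proof (induction L arbitrary: b)
  case 0 then show ?case by simp
next
  case (Suc L)
  have "set (hyp b L) \<subseteq> {(p, q). b \<le> p \<and> p < q \<and> q < b + 2^Suc L}" using Suc[of b] by auto
  moreover have "set (hyp (b+2^L) L) \<subseteq> {(p, q). b \<le> p \<and> p < q \<and> q < b + 2^Suc L}" using Suc[of "b+2^L"] by auto
  moreover have "set (map (\<lambda>i. (b+i, b+2^L+i)) [0..<2^L]) \<subseteq> {(p, q). b \<le> p \<and> p < q \<and> q < b + 2^Suc L}" by auto
  ultimately show ?case by simp
qed

lemma pair_run:
  assumes "m \<le> K" "\<And>i. i < K \<Longrightarrow> y (b+i) = a1" "\<And>i. i < K \<Longrightarrow> y (b+K+i) = a2"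
  shows "foldl equilibrate y (map (\<lambda>i. (b+i, b+K+i)) [0..<m]) t =
    (if (b \<le> t \<and> t < b+m) \<or> (b+K \<le> t \<and> t < b+K+m) then (a1+a2)/2 else y t)"
  using assms(1)
proof (induction m arbitrary: t)
  case 0 then show ?case by simp
next
  case (Suc m)
  define z where "z = foldl equilibrate y (map (\<lambda>i. (b+i, b+K+i)) [0..<m])"
  have z: "\<And>t. z t = (if (b \<le> t \<and> t < b+m) \<or> (b+K \<le> t \<and> t < b+K+m) then (a1+a2)/2 else y t)"
    using Suc unfolding z_def by simp
  have zb: "z (b+m) = a1" using z assms(2)[of m] Suc.prems by simp
  have zc: "z (b+K+m) = a2" using z assms(3)[of m] Suc.prems by simp
  have "foldl equilibrate y (map (\<lambda>i. (b+i, b+K+i)) [0..<Suc m]) = equilibrate z (b+m, b+K+m)"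
    unfolding z_def by simp
  then show ?case unfolding equilibrate_def Let_def using z zb zc Suc.prems
    by (auto simp: add.commute)
qed

lemma sum_split_lt: "(\<Sum>i<m+(k::nat). f i) = (\<Sum>i<m. f i) + (\<Sum>i<k. f (m+i))"
  by (induction k) (auto simp: add.assoc)

lemma hyp_run:
  "foldl equilibrate x (hyp b L) t = (if b \<le> t \<and> t < b + 2^L then (\<Sum>i<2^L. x (b+i)) / 2^L else x t)"
proof (induction L arbitrary: b x t)
  case 0 then show ?case by (cases "t = b") auto
next
  case (Suc L)
  define K :: nat where "K = 2^L"
  define x1 where "x1 = foldl equilibrate x (hyp b L)"
  define x2 where "x2 = foldl equilibrate x1 (hyp (b+K) L)"
  define a1 where "a1 = (\<Sum>i<K. x (b+i)) / K"
  define a2 where "a2 = (\<Sum>i<K. x (b+K+i)) / K"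
  have x1: "\<And>t. x1 t = (if b \<le> t \<and> t < b + K then a1 else x t)"
    using Suc unfolding x1_def a1_def K_def by simp
  have s2: "(\<Sum>i<K. x1 (b+K+i)) = (\<Sum>i<K. x (b+K+i))"
    by (rule sum.cong) (auto simp: x1)
  have x2: "\<And>t. x2 t = (if b + K \<le> t \<and> t < b + K + K then a2 else x1 t)"
    using Suc[of x1 "b+K"] s2 unfolding x2_def a2_def K_def by simp
  have e: "foldl equilibrate x (hyp b (Suc L)) = foldl equilibrate x2 (map (\<lambda>i. (b+i, b+K+i)) [0..<K])"
    unfolding x2_def x1_def K_def by simp
  have p: "foldl equilibrate x2 (map (\<lambda>i. (b+i, b+K+i)) [0..<K]) t =
    (if (b \<le> t \<and> t < b+K) \<or> (b+K \<le> t \<and> t < b+K+K) then (a1+a2)/2 else x2 t)"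
    by (rule pair_run) (auto simp: x1 x2)
  have Kp: "K > 0" unfolding K_def by simp
  have avg: "(a1 + a2) / 2 = (\<Sum>i<2^Suc L. x (b+i)) / 2^Suc L"
  proof -
    have "(\<Sum>i<2^Suc L. x (b+i)) = (\<Sum>i<K+K. x (b+i))" unfolding K_def by (simp add: mult_2)
    also have "\<dots> = (\<Sum>i<K. x (b+i)) + (\<Sum>i<K. x (b+K+i))" by (simp add: sum_split_lt add.assoc)
    finally show ?thesis unfolding a1_def a2_def K_def using Kp by (simp add: field_simps)
  qed
  show ?case unfolding e p avg using x1 x2 unfolding K_def by auto
qed



lemma exists_log: "(n::nat) \<ge> 1 \<Longrightarrow> \<exists>L. 2^L \<le> n \<and> n < 2^Suc L"
proof (induction n rule: nat_induct_at_least)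
  case base then show ?case by (rule exI[of _ 0]) simp
next
  case (Suc n)
  then obtain L where L: "2^L \<le> n" "n < 2^Suc L" by blast
  show ?case
  proof (cases "Suc n < 2^Suc L")
    case True then show ?thesis using L by (intro exI[of _ L]) simp
  next
    case False
    then have "Suc n = 2^Suc L" using L by simp
    then show ?thesis by (intro exI[of _ "Suc L"]) simp
  qed
qed

theorem theorem1p1:
  fixes n :: nat
  assumes "n \<ge> 1"
  shows "\<exists>s. valid_strategy {..<2*n} s \<and>
    (let y = run_strategy (\<lambda>i. if i < n then 1 else 0) s in
       (\<forall>i<n. y i < 2 / sqrt (real n)) \<and>
       (\<forall>i. n \<le> i \<and> i < 2*n \<longrightarrow> y i > 1 - 2 / sqrt (real n)))"
proof -
  obtain L where L: "2^L \<le> n" "n < 2^Suc L" using exists_log[OF assms] by blast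
  define B :: nat where "B = 2^L"
  have B: "B \<le> n" "n < 2*B" "B > 0" using L unfolding B_def by auto
  define s where "s = phase1 n @ hyp (n-B) L @ hyp (2*n-B) L"
  define z0 where "z0 = st n n 0"
  define z1 where "z1 = foldl equilibrate z0 (hyp (n-B) L)"
  define y where "y = foldl equilibrate z1 (hyp (2*n-B) L)"
  have y_def': "run_strategy (\<lambda>i. if i < n then 1 else 0) s = y"
    using phase1_run[of n] unfolding y_def z1_def z0_def s_def run_strategy_def by simp
  define A where "A = (\<Sum>i<B. u (Suc (n-B+i)) n) / B"
  have z0: "\<And>t. t < n \<Longrightarrow> z0 t = u (Suc t) n" "\<And>t. n \<le> t \<Longrightarrow> t < 2*n \<Longrightarrow> z0 t = u n (t - n + 1)"
    unfolding z0_def st_def by auto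
  have z1: "\<And>t. z1 t = (if n - B \<le> t \<and> t < n then A else z0 t)"
  proof -
    fix t
    have "z1 t = (if n - B \<le> t \<and> t < n - B + 2^L then (\<Sum>i<2^L. z0 (n - B + i)) / 2^L else z0 t)"
      unfolding z1_def by (rule hyp_run)
    moreover have "(\<Sum>i<B. z0 (n - B + i)) = (\<Sum>i<B. u (Suc (n-B+i)) n)"
      by (rule sum.cong) (use z0 B in auto)
    ultimately show "z1 t = (if n - B \<le> t \<and> t < n then A else z0 t)"
      using B unfolding A_def B_def by simp
  qed
  have yv: "\<And>t. y t = (if 2*n - B \<le> t \<and> t < 2*n then (\<Sum>i<B. z1 (2*n - B + i)) / B else z1 t)"
  proof -
    fix t
    have "y t = (if 2*n - B \<le> t \<and> t < 2*n - B + 2^L then (\<Sum>i<2^L. z1 (2*n - B + i)) / 2^L else z1 t)"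
      unfolding y_def by (rule hyp_run)
    then show "y t = (if 2*n - B \<le> t \<and> t < 2*n then (\<Sum>i<B. z1 (2*n - B + i)) / B else z1 t)"
      using B unfolding B_def by simp
  qed
  have Rsplit: "R n n = (\<Sum>k<n-B. u (Suc k) n) + (\<Sum>i<B. u (Suc (n-B+i)) n)"
    unfolding R_def using sum_split_lt[of "\<lambda>k. u (Suc k) n" "n-B" B] B by simp
  have "(\<Sum>k<n-B. u (Suc k) n) \<ge> 0" by (rule sum_nonneg) (simp add: u_nonneg)
  then have sumA: "(\<Sum>i<B. u (Suc (n-B+i)) n) \<le> sqrt n" using Rsplit S_bound[of n] by linarith
  have sq: "sqrt (real n) > 0" using assms by simp
  have A_lt: "A < 2 / sqrt n"
  proof -
    have "A \<le> sqrt n / B" unfolding A_def using sumA B by (simp add: divide_right_mono)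
    also have "\<dots> < 2 / sqrt n"
    proof -
      have "sqrt n * sqrt n = real n" using sq by simp
      then have "sqrt n * sqrt n < 2 * real B" using B by linarith
      then show ?thesis using sq B by (simp add: field_simps)
    qed
    finally show ?thesis .
  qed
  have A_ge: "\<And>t. t < n - B \<Longrightarrow> u (Suc t) n \<le> A"
  proof -
    fix t assume t: "t < n - B"
    have "card {..<B} * u (Suc t) n \<le> (\<Sum>i<B. u (Suc (n-B+i)) n)"
      by (rule sum_bounded_below) (use t in \<open>auto intro!: u_mono\<close>)
    then show "u (Suc t) n \<le> A" unfolding A_def using B by (simp add: field_simps)
  qed
  have red: "\<And>t. t < n \<Longrightarrow> y t \<le> A"
  proof -
    fix t assume t: "t < n"
    have "\<not> (2*n - B \<le> t)" using t B by linarith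
    then have "y t = z1 t" using yv by simp
    then show "y t \<le> A" using z1 z0 t A_ge by auto
  qed
  have usym: "\<And>j. j \<ge> 1 \<Longrightarrow> u n j = 1 - u j n"
    using u_sym assms by (metis add_diff_cancel_right' not_one_le_zero prod.inject)
  have blue: "\<And>t. n \<le> t \<Longrightarrow> t < 2*n \<Longrightarrow> y t \<ge> 1 - A"
  proof -
    fix t assume t: "n \<le> t" "t < 2*n"
    show "y t \<ge> 1 - A"
    proof (cases "2*n - B \<le> t")
      case True
      have "(\<Sum>i<B. z1 (2*n - B + i)) = (\<Sum>i<B. 1 - u (Suc (n-B+i)) n)"
      proof (rule sum.cong)
        fix i assume i: "i \<in> {..<B}"
        have "z1 (2*n - B + i) = z0 (2*n - B + i)" using z1 i B by auto
        also have "\<dots> = u n (2*n - B + i - n + 1)" using z0(2)[of "2*n-B+i"] i B by auto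
        also have "2*n - B + i - n + 1 = Suc (n-B+i)" using B by simp
        finally show "z1 (2*n - B + i) = 1 - u (Suc (n-B+i)) n" using usym by simp
      qed simp
      also have "\<dots> = B - (\<Sum>i<B. u (Suc (n-B+i)) n)" by (simp add: sum_subtractf)
      finally have "y t = (B - (\<Sum>i<B. u (Suc (n-B+i)) n)) / B" using yv True t by simp
      also have "\<dots> = 1 - A" unfolding A_def using B by (simp add: field_simps)
      finally show ?thesis by simp
    next
      case False
      have "y t = z1 t" using yv False by simp
      also have "\<dots> = u n (t - n + 1)" using z1 z0 t B by auto
      also have "\<dots> = 1 - u (Suc (t - n)) n" using usym by simp
      moreover have "t - n < n - B" using False t by linarith
      ultimately show ?thesis using A_ge[of "t-n"] by simp
    qed
  qed
  have valid: "valid_strategy {..<2*n} s"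
  proof -
    have "set s \<subseteq> {(p, q). p < 2*n \<and> q < 2*n \<and> p \<noteq> q}"
      unfolding s_def using phase1_valid[of n] hyp_valid[of "n-B" L] hyp_valid[of "2*n-B" L] B
      unfolding B_def by fastforce
    then show ?thesis unfolding valid_strategy_def by auto
  qed
  show ?thesis
    apply (rule exI[of _ s])
    unfolding y_def' Let_def using valid red blue A_lt by fastforce
qed

end
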